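(* Let $\pi\in\{2143,1234\}$ and $w\in B_n$. If $w$ contains $\pi$, then there exist indices $-n\leq i_1<i_2<i_3<i_4\leq n$ (all nonzero) at which $w$ forms the pattern $\pi$ and such that there is no $k\in\{1,2,3,4\}$ with $i_k>0$ and $w(i_k)<0$.
   Context: $B_n$ is the group of permutations $w$ of $\{-n,\ldots,-1,1,\ldots,n\}$ with $w(-i)=-w(i)$. Indices $i_1<i_2<i_3<i_4$ form the pattern $1234$ if $w(i_1)<w(i_2)<w(i_3)<w(i_4)$, and form the pattern $2143$ if $w(i_2)<w(i_1)<w(i_4)<w(i_3)$. $w$ contains $\pi$ if some such quadruple of indices forms $\pi$. *)

theory Defs
  imports Main
begin

definition signed_set :: "nat \<Rightarrow> int set" where
  "signed_set n = {i. i \<noteq> 0 \<and> - int n \<le> i \<and> i \<le> int n}"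

text \<open>Elements of the hyperoctahedral group B_n: permutations w of the signed set with w(-i) = -w(i).
  Values outside the signed set are irrelevant; we fix them to be the identity.\<close>
definition in_B :: "nat \<Rightarrow> (int \<Rightarrow> int) \<Rightarrow> bool" where
  "in_B n w \<longleftrightarrow> bij_betw w (signed_set n) (signed_set n)
     \<and> (\<forall>i \<in> signed_set n. w (- i) = - w i)
     \<and> (\<forall>i. i \<notin> signed_set n \<longrightarrow> w i = i)"

datatype pattern = P1234 | P2143

definition forms :: "pattern \<Rightarrow> (int \<Rightarrow> int) \<Rightarrow> int \<Rightarrow> int \<Rightarrow> int \<Rightarrow> int \<Rightarrow> bool" where
  "forms p w i1 i2 i3 i4 \<longleftrightarrow> i1 < i2 \<and> i2 < i3 \<and> i3 < i4 \<and>
     (case p of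
        P1234 \<Rightarrow> w i1 < w i2 \<and> w i2 < w i3 \<and> w i3 < w i4
      | P2143 \<Rightarrow> w i2 < w i1 \<and> w i1 < w i4 \<and> w i4 < w i3)"

definition contains :: "nat \<Rightarrow> pattern \<Rightarrow> (int \<Rightarrow> int) \<Rightarrow> bool" where
  "contains n p w \<longleftrightarrow> (\<exists>i1 i2 i3 i4. i1 \<in> signed_set n \<and> i2 \<in> signed_set n \<and>
     i3 \<in> signed_set n \<and> i4 \<in> signed_set n \<and> forms p w i1 i2 i3 i4)"

end

theory Submission
  imports Defs
begin

lemma neg_in: "i \<in> signed_set n \<Longrightarrow> - i \<in> signed_set n"
  unfolding signed_set_def by auto

theorem lemma2p2:
  fixes n :: nat and p :: pattern and w :: "int \<Rightarrow> int"
  assumes "in_B n w" and "contains n p w"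
  shows "\<exists>i1 i2 i3 i4. i1 \<in> signed_set n \<and> i2 \<in> signed_set n \<and>
           i3 \<in> signed_set n \<and> i4 \<in> signed_set n \<and> forms p w i1 i2 i3 i4 \<and>
           \<not> (\<exists>k \<in> {i1, i2, i3, i4}. k > 0 \<and> w k < 0)"
proof -
  have odd: "\<And>i. i \<in> signed_set n \<Longrightarrow> w (- i) = - w i" using assms(1) unfolding in_B_def by blast
  obtain a b c d where S: "a \<in> signed_set n" "b \<in> signed_set n" "c \<in> signed_set n" "d \<in> signed_set n"
    and F: "forms p w a b c d" using assms(2) unfolding contains_def by blast
  have Sm: "- a \<in> signed_set n" "- b \<in> signed_set n" "- c \<in> signed_set n" "- d \<in> signed_set n"
    using S neg_in by auto
  have wm: "w (-a) = - w a" "w (-b) = - w b" "w (-c) = - w c" "w (-d) = - w d"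
    using S odd by auto
  show ?thesis
  proof (cases p)
    case P1234
    then have o: "a < b" "b < c" "c < d" "w a < w b" "w b < w c" "w c < w d" using F unfolding forms_def by auto
    show ?thesis
    proof (cases "\<exists>k \<in> {a, b, c, d}. k > 0 \<and> w k < 0")
      case False
      then show ?thesis using S F by blast
    next
      case True
      have "forms p w (-d) (-c) (-b) (-a)" using o wm P1234 unfolding forms_def by auto
      moreover have "\<not> (\<exists>k \<in> {-d, -c, -b, -a}. k > 0 \<and> w k < 0)"
        using True o wm by auto
      ultimately show ?thesis using Sm by blast
    qed
  next
    case P2143
    then have o: "a < b" "b < c" "c < d" "w b < w a" "w a < w d" "w d < w c" using F unfolding forms_def by auto
    show ?thesis
    proof (cases "\<exists>k \<in> {a, b, c, d}. k > 0 \<and> w k < 0")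
      case False
      then show ?thesis using S F by blast
    next
      case True
      show ?thesis
      proof (cases "\<exists>k \<in> {-d, -c, -b, -a}. k > 0 \<and> w k < 0")
        case False
        have "forms p w (-d) (-c) (-b) (-a)" using o wm P2143 unfolding forms_def by auto
        then show ?thesis using Sm False by blast
      next
        case True2: True
        have "(b < 0 \<and> w a < 0) \<or> (c > 0 \<and> w d > 0)"
          using True True2 o wm by auto
        then show ?thesis
        proof
          assume h: "b < 0 \<and> w a < 0"
          have "forms p w a b (-b) (-a)" using o wm h P2143 unfolding forms_def by auto
          moreover have "\<not> (\<exists>k \<in> {a, b, -b, -a}. k > 0 \<and> w k < 0)" using o wm h by auto
          ultimately show ?thesis using S Sm by blast
        next
          assume h: "c > 0 \<and> w d > 0"
          have "forms p w (-d) (-c) c d" using o wm h P2143 unfolding forms_def by auto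
          moreover have "\<not> (\<exists>k \<in> {-d, -c, c, d}. k > 0 \<and> w k < 0)" using o wm h by auto
          ultimately show ?thesis using S Sm by blast
        qed
      qed
    qed
  qed
qed

end
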